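(* In the allocation problem and Synchronized Greedy (SG) mechanism described in the context, suppose $\min_j q_j\ge \max_i r_i$. Then the SG mechanism is strategy-proof: for every agent $i$ and every permutation $\sigma_i$ of the goods, letting $\sigma$ be the bid profile in which agent $i$ bids $\sigma_i$ and every other agent $i'$ bids its true list $\pi_{i'}$, it is not the case that $a^\sigma_{i*} >_i a^\pi_{i*}$.
   Context: There are $m$ distinct divisible goods; good $j$ is available in amount $q_j>0$. There are $n$ agents; agent $i$ is to receive a total of $r_i>0$, with $\sum_j q_j=\sum_i r_i$. An allocation is a family $a_{ij}\ge 0$ with $\sum_j a_{ij}=r_i$ and $\sum_i a_{ij}=q_j$; $a_{i*}=(a_{i1},\ldots,a_{im})$ is agent $i$'s share. Each agent $i$ has a true preference list $\pi_i$, a permutation of the goods ($\pi_i(1)$ most preferred); $\pi=(\pi_1,\ldots,\pi_n)$. Agent $i$ prefers $a_{i*}$ to $b_{i*}$, written $a_{i*}>_i b_{i*}$, if the leftmost nonzero coordinate of $(a_{i\pi_i(\ell)}-b_{i\pi_i(\ell)})_{\ell=1}^m$ is positive. The SG mechanism: each agent $i$ bids a permutation $\sigma_i$ of the goods; over time $t\in[0,1]$ each agent $i$ receives, at rate $r_i$, the good highest in $\sigma_i$ among those not yet exhausted (a good is exhausted when the total amount handed out equals $q_j$; several agents may receive a good simultaneously; upon exhaustion, agents receiving it switch instantly to their next non-exhausted good). $a^\sigma_{ij}$ is the total amount of good $j$ agent $i$ receives under bid profile $\sigma$. *)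

theory Defs
  imports Complex_Main
begin

text \<open>Goods have type 'g, agents type 'a (both finite). A preference list / bid is a
list of all goods without repetition; its head is the most preferred good.\<close>

definition is_perm_list :: "'g list \<Rightarrow> bool" where
  "is_perm_list xs \<longleftrightarrow> distinct xs \<and> set xs = UNIV"

definition lex_prefers :: "'g list \<Rightarrow> ('g \<Rightarrow> real) \<Rightarrow> ('g \<Rightarrow> real) \<Rightarrow> bool" where
  "lex_prefers p a b \<longleftrightarrow>
     (\<exists>k < length p. (\<forall>l < k. a (p ! l) = b (p ! l)) \<and> a (p ! k) > b (p ! k))"

text \<open>State of the SG process: (current time, remaining amount of each good, amounts allocated so far).\<close>
type_synonym ('a, 'g) sg_state = "real \<times> ('g \<Rightarrow> real) \<times> ('a \<Rightarrow> 'g \<Rightarrow> real)"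

definition exhausted :: "('g \<Rightarrow> real) \<Rightarrow> 'g set" where
  "exhausted rem = {j. rem j \<le> 0}"

definition cur_good :: "'g list \<Rightarrow> 'g set \<Rightarrow> 'g" where
  "cur_good s E = hd (filter (\<lambda>j. j \<notin> E) s)"

definition sg_step :: "('a::finite \<Rightarrow> real) \<Rightarrow> ('a \<Rightarrow> 'g::finite list)
    \<Rightarrow> ('a, 'g) sg_state \<Rightarrow> ('a, 'g) sg_state" where
  "sg_step r \<sigma> st =
    (let (t, rem, al) = st; E = exhausted rem in
     if E = UNIV \<or> t \<ge> 1 then st else
     (let c = (\<lambda>i. cur_good (\<sigma> i) E);
          R = (\<lambda>j. \<Sum>i\<in>{i. c i = j}. r i);
          \<delta> = Min (insert (1 - t) {rem j / R j | j. j \<notin> E \<and> R j > 0})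
      in (t + \<delta>, (\<lambda>j. rem j - R j * \<delta>),
          (\<lambda>i j. al i j + (if c i = j then r i * \<delta> else 0)))))"

text \<open>The SG allocation a^\<sigma>: run the phases from time 0; at most CARD('g) goods can be
exhausted before time 1, so CARD('g)+1 phases suffice (further phases change nothing).\<close>
definition SG :: "('g::finite \<Rightarrow> real) \<Rightarrow> ('a::finite \<Rightarrow> real) \<Rightarrow> ('a \<Rightarrow> 'g list)
    \<Rightarrow> 'a \<Rightarrow> 'g \<Rightarrow> real" where
  "SG q r \<sigma> = snd (snd ((sg_step r \<sigma> ^^ (card (UNIV :: 'g set) + 1)) (0, q, (\<lambda>i j. 0))))"

end

theory Submission
  imports Defs
begin


lemma cg_exists:
  assumes "\<exists>y\<in>set xs. y \<notin> E"
  shows "\<exists>k<length xs. cur_good xs E = xs!k \<and> xs!k \<notin> E \<and> (\<forall>l<k. xs!l \<in> E)"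
  using assms
proof (induction xs)
  case Nil then show ?case by simp
next
  case (Cons a xs)
  show ?case
  proof (cases "a \<in> E")
    case False
    then show ?thesis by (rule_tac x=0 in exI) (simp add: cur_good_def)
  next
    case True
    then have "\<exists>y\<in>set xs. y \<notin> E" using Cons.prems by auto
    from Cons.IH[OF this] obtain k where k: "k<length xs" "cur_good xs E = xs!k" "xs!k \<notin> E" "\<forall>l<k. xs!l \<in> E" by blast
    have "cur_good (a#xs) E = cur_good xs E" using True by (simp add: cur_good_def)
    then show ?thesis using k True
      by (rule_tac x="Suc k" in exI) (auto simp: less_Suc_eq_0_disj)
  qed
qed

lemma cg_eq:
  assumes "k<length xs" "xs!k \<notin> E" "\<forall>l<k. xs!l \<in> E"
  shows "cur_good xs E = xs!k"
  using assms
proof (induction xs arbitrary: k)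
  case Nil then show ?case by simp
next
  case (Cons a xs)
  show ?case
  proof (cases k)
    case 0 then show ?thesis using Cons.prems by (simp add: cur_good_def)
  next
    case (Suc k')
    have "a \<in> E" using Cons.prems Suc by force
    moreover have "cur_good xs E = xs!k'"
      using Cons.IH[of k'] Cons.prems Suc by force
    ultimately show ?thesis using Suc by (simp add: cur_good_def)
  qed
qed

lemma perm_ex: "is_perm_list xs \<Longrightarrow> E \<noteq> UNIV \<Longrightarrow> \<exists>y\<in>set xs. y \<notin> E"
  unfolding is_perm_list_def by auto

lemma cg_notin: "is_perm_list xs \<Longrightarrow> E \<noteq> UNIV \<Longrightarrow> cur_good xs E \<notin> E"
  using cg_exists[OF perm_ex] by metis

lemma perm_pos: "is_perm_list xs \<Longrightarrow> \<exists>k<length xs. xs!k = h"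
  unfolding is_perm_list_def by (metis UNIV_I in_set_conv_nth)

lemma perm_idx: "is_perm_list xs \<Longrightarrow> k<length xs \<Longrightarrow> k'<length xs \<Longrightarrow> xs!k = xs!k' \<Longrightarrow> k = k'"
  unfolding is_perm_list_def by (simp add: nth_eq_iff_index_eq)

lemma cg_pre:
  assumes "is_perm_list xs" "E \<noteq> UNIV" "cur_good xs E = xs!k" "k < length xs"
  shows "xs!k \<notin> E \<and> (\<forall>l<k. xs!l \<in> E)"
proof -
  obtain k' where k': "k'<length xs" "cur_good xs E = xs!k'" "xs!k' \<notin> E" "\<forall>l<k'. xs!l \<in> E"
    using cg_exists[OF perm_ex[OF assms(1,2)]] by blast
  have "k = k'" using perm_idx[OF assms(1) assms(4) k'(1)] assms(3) k'(2) by simp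
  then show ?thesis using k' by simp
qed

lemma cg_mono:
  assumes "is_perm_list xs" "E \<noteq> UNIV" "E \<subseteq> E'" "cur_good xs E \<notin> E'"
  shows "cur_good xs E' = cur_good xs E"
proof -
  obtain k where k: "k<length xs" "cur_good xs E = xs!k" "xs!k \<notin> E" "\<forall>l<k. xs!l \<in> E"
    using cg_exists[OF perm_ex[OF assms(1,2)]] by blast
  show ?thesis using cg_eq[of k xs E'] k assms(3,4) by auto
qed

lemma sg_step_t: "1 \<le> t \<Longrightarrow> sg_step r \<sigma> (t, rem, a) = (t, rem, a)"
  unfolding sg_step_def Let_def by simp


locale run =
  fixes q :: "'g::finite \<Rightarrow> real" and r :: "'a::finite \<Rightarrow> real" and \<sigma> :: "'a \<Rightarrow> 'g list"
  assumes qpos: "\<forall>j. q j > 0" and rpos: "\<forall>k. r k > 0"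
    and sumeq: "(\<Sum>j\<in>UNIV. q j) = (\<Sum>k\<in>UNIV. r k)"
    and perm: "\<forall>k. is_perm_list (\<sigma> k)"
begin

definition st where "st n = (sg_step r \<sigma> ^^ n) (0, q, \<lambda>i j. 0)"
definition tt where "tt n = fst (st n)"
definition rm where "rm n = fst (snd (st n))"
definition al where "al n = snd (snd (st n))"
definition EXH where "EXH n = exhausted (rm n)"
definition cc where "cc n k = cur_good (\<sigma> k) (EXH n)"
definition RR where "RR n h = (\<Sum>k\<in>{k. cc n k = h}. r k)"
definition dd where "dd n = Min (insert (1 - tt n) {rm n h / RR n h | h. h \<notin> EXH n \<and> RR n h > 0})"
definition NN where "NN = card (UNIV::'g set) + 1"

lemma st_eq: "st n = (tt n, rm n, al n)" by (simp add: tt_def rm_def al_def)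

lemma st_Suc: "st (Suc n) = sg_step r \<sigma> (st n)" by (simp add: st_def)

definition inv where "inv n \<longleftrightarrow> 0 \<le> tt n \<and> tt n \<le> 1 \<and> (\<forall>h. rm n h \<ge> 0)
   \<and> (\<forall>h. rm n h = q h - (\<Sum>k\<in>UNIV. al n k h)) \<and> (\<forall>k h. al n k h \<ge> 0)
   \<and> (\<forall>k. (\<Sum>h\<in>UNIV. al n k h) = r k * tt n)"

lemma inv0: "inv 0"
  using qpos by (auto simp: inv_def tt_def rm_def al_def st_def less_imp_le)

lemma EX_UNIV: assumes "inv n" "EXH n = UNIV" shows "tt n = 1"
proof -
  have "\<forall>h. rm n h \<le> 0"
  proof
    fix h
    have "h \<in> EXH n" using assms(2) by simp
    then show "rm n h \<le> 0" by (simp add: EXH_def exhausted_def)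
  qed
  then have "\<forall>h. rm n h = 0" using assms(1) unfolding inv_def by (meson order_antisym)
  then have "\<forall>h. q h = (\<Sum>k\<in>UNIV. al n k h)" using assms(1) by (auto simp: inv_def)
  then have "(\<Sum>h\<in>UNIV. q h) = (\<Sum>h\<in>UNIV. \<Sum>k\<in>UNIV. al n k h)" by simp
  also have "\<dots> = (\<Sum>k\<in>UNIV. \<Sum>h\<in>UNIV. al n k h)" by (rule sum.swap)
  also have "\<dots> = (\<Sum>k\<in>UNIV. r k) * tt n" using assms(1) by (simp add: inv_def sum_distrib_right)
  finally have "(\<Sum>k\<in>UNIV. r k) * tt n = (\<Sum>k\<in>UNIV. r k) * 1" using sumeq by simp
  moreover have "(\<Sum>k\<in>UNIV. r k) > 0" using rpos by (simp add: sum_pos)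
  ultimately show ?thesis by simp
qed

lemma step_term: "tt n \<ge> 1 \<Longrightarrow> st (Suc n) = st n"
  using sg_step_t[of "tt n" r \<sigma> "rm n" "al n"] st_eq[of n] st_Suc[of n] by simp

lemma cc_notin: "inv n \<Longrightarrow> tt n < 1 \<Longrightarrow> cc n k \<notin> EXH n"
proof -
  assume a: "inv n" "tt n < 1"
  then have "EXH n \<noteq> UNIV" using EX_UNIV by force
  then show ?thesis unfolding cc_def using cg_notin perm by blast
qed

lemma RR_nonneg: "RR n h \<ge> 0"
  using rpos by (simp add: RR_def sum_nonneg less_imp_le)

lemma RR_pos_notin: "inv n \<Longrightarrow> tt n < 1 \<Longrightarrow> RR n h > 0 \<Longrightarrow> h \<notin> EXH n"
proof -
  assume a: "inv n" "tt n < 1" "RR n h > 0"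
  have "{k. cc n k = h} \<noteq> {}"
  proof
    assume "{k. cc n k = h} = {}"
    then have "RR n h = 0" by (simp add: RR_def)
    then show False using a by simp
  qed
  then obtain k where "cc n k = h" by auto
  then show ?thesis using cc_notin[OF a(1,2)] by auto
qed

lemma step_nt: "inv n \<Longrightarrow> tt n < 1 \<Longrightarrow> st (Suc n) = (tt n + dd n, \<lambda>h. rm n h - RR n h * dd n,
     \<lambda>k h. al n k h + (if cc n k = h then r k * dd n else 0))"
proof -
  assume a: "inv n" "tt n < 1"
  then have c: "\<not> (EXH n = UNIV \<or> tt n \<ge> 1)" using EX_UNIV by force
  show ?thesis
    unfolding st_Suc st_eq[of n] sg_step_def Let_def prod.case EXH_def[symmetric] if_not_P[OF c]
      dd_def RR_def cc_def by (rule refl)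
qed

lemma tt_Suc: "inv n \<Longrightarrow> tt n < 1 \<Longrightarrow> tt (Suc n) = tt n + dd n"
  using step_nt by (simp add: tt_def)
lemma rm_Suc: "inv n \<Longrightarrow> tt n < 1 \<Longrightarrow> rm (Suc n) h = rm n h - RR n h * dd n"
  using step_nt by (simp add: rm_def)
lemma al_Suc: "inv n \<Longrightarrow> tt n < 1 \<Longrightarrow> al (Suc n) k h = al n k h + (if cc n k = h then r k * dd n else 0)"
  using step_nt by (simp add: al_def)

lemma tt_Suc_t: "tt n \<ge> 1 \<Longrightarrow> tt (Suc n) = tt n" using step_term by (simp add: tt_def)
lemma rm_Suc_t: "tt n \<ge> 1 \<Longrightarrow> rm (Suc n) = rm n" using step_term by (simp add: rm_def)
lemma al_Suc_t: "tt n \<ge> 1 \<Longrightarrow> al (Suc n) = al n" using step_term by (simp add: al_def)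

lemma dd_props:
  assumes "inv n" "tt n < 1"
  shows "dd n > 0 \<and> dd n \<le> 1 - tt n \<and> (\<forall>h. h \<notin> EXH n \<and> RR n h > 0 \<longrightarrow> dd n \<le> rm n h / RR n h)
     \<and> (dd n = 1 - tt n \<or> (\<exists>h. h \<notin> EXH n \<and> RR n h > 0 \<and> dd n = rm n h / RR n h))"
proof -
  let ?F = "{rm n h / RR n h | h. h \<notin> EXH n \<and> RR n h > 0}"
  have fin: "finite ?F"
  proof -
    have "?F \<subseteq> (\<lambda>h. rm n h / RR n h) ` UNIV" by blast
    moreover have "finite ((\<lambda>h. rm n h / RR n h) ` UNIV)" by simp
    ultimately show ?thesis by (rule finite_subset)
  qed
  have pos: "\<forall>x\<in>insert (1 - tt n) ?F. x > 0"
  proof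
    fix x assume "x \<in> insert (1 - tt n) ?F"
    then consider "x = 1 - tt n" | h where "x = rm n h / RR n h" "h \<notin> EXH n" "RR n h > 0" by blast
    then show "x > 0"
    proof cases
      case 1 then show ?thesis using assms(2) by simp
    next
      case 2
      then have "rm n h > 0" by (simp add: EXH_def exhausted_def)
      then show ?thesis using 2 by simp
    qed
  qed
  have "dd n \<in> insert (1 - tt n) ?F" unfolding dd_def by (rule Min_in) (use fin in simp_all)
  then have "dd n > 0 \<and> (dd n = 1 - tt n \<or> (\<exists>h. h \<notin> EXH n \<and> RR n h > 0 \<and> dd n = rm n h / RR n h))"
    using pos by blast
  moreover have "dd n \<le> 1 - tt n" unfolding dd_def by (rule Min_le) (use fin in simp_all)
  moreover have "\<forall>h. h \<notin> EXH n \<and> RR n h > 0 \<longrightarrow> dd n \<le> rm n h / RR n h"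
  proof (intro allI impI)
    fix h assume "h \<notin> EXH n \<and> RR n h > 0"
    then have "rm n h / RR n h \<in> insert (1 - tt n) ?F" by blast
    then show "dd n \<le> rm n h / RR n h" unfolding dd_def using fin by (intro Min_le) simp_all
  qed
  ultimately show ?thesis by blast
qed

end

context run begin

lemma sum_cc: "(\<Sum>k\<in>UNIV. if cc n k = h then r k * d else 0) = RR n h * d"
  by (simp add: RR_def sum.If_cases sum_distrib_right)

lemma invD: assumes "inv n" shows "0 \<le> tt n" "tt n \<le> 1" "\<forall>h. rm n h \<ge> 0" "\<forall>h. rm n h = q h - (\<Sum>k\<in>UNIV. al n k h)"
    "\<forall>k h. al n k h \<ge> 0" "\<forall>k. (\<Sum>h\<in>UNIV. al n k h) = r k * tt n"
  using assms unfolding inv_def by blast+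

lemma inv_Suc: assumes "inv n" shows "inv (Suc n)"
proof (cases "tt n < 1")
  case False
  then have "tt (Suc n) = tt n" "rm (Suc n) = rm n" "al (Suc n) = al n"
    using tt_Suc_t rm_Suc_t al_Suc_t by simp_all
  then show ?thesis using assms unfolding inv_def by (elim ssubst) assumption
next
  case True
  note dp = dd_props[OF assms True]
  have I: "0 \<le> tt n" "tt n \<le> 1" "\<forall>h. rm n h \<ge> 0" "\<forall>h. rm n h = q h - (\<Sum>k\<in>UNIV. al n k h)"
    "\<forall>k h. al n k h \<ge> 0" "\<forall>k. (\<Sum>h\<in>UNIV. al n k h) = r k * tt n"
    using invD[OF assms] .
  have t1: "0 \<le> tt (Suc n)" "tt (Suc n) \<le> 1" using tt_Suc[OF assms True] dp I by auto
  have t2: "\<forall>h. rm (Suc n) h \<ge> 0"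
  proof
    fix h
    show "rm (Suc n) h \<ge> 0"
    proof (cases "RR n h > 0")
      case True': True
      then have "h \<notin> EXH n" using RR_pos_notin[OF assms True] by blast
      then have "dd n \<le> rm n h / RR n h" using dp True' by blast
      then have "RR n h * dd n \<le> rm n h" using True' by (simp add: field_simps)
      then show ?thesis using rm_Suc[OF assms True] by simp
    next
      case False
      then have "RR n h = 0" using RR_nonneg[of n h] by simp
      then show ?thesis using rm_Suc[OF assms True] I by simp
    qed
  qed
  have t3: "\<forall>h. rm (Suc n) h = q h - (\<Sum>k\<in>UNIV. al (Suc n) k h)"
  proof
    fix h
    have "(\<Sum>k\<in>UNIV. al (Suc n) k h) = (\<Sum>k\<in>UNIV. al n k h + (if cc n k = h then r k * dd n else 0))"
      using al_Suc[OF assms True] by presburger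
    then have "(\<Sum>k\<in>UNIV. al (Suc n) k h) = (\<Sum>k\<in>UNIV. al n k h) + (\<Sum>k\<in>UNIV. if cc n k = h then r k * dd n else 0)"
      by (simp only: sum.distrib)
    then show "rm (Suc n) h = q h - (\<Sum>k\<in>UNIV. al (Suc n) k h)"
      using rm_Suc[OF assms True] I(4) sum_cc by simp
  qed
  have t4: "\<forall>k h. al (Suc n) k h \<ge> 0"
    using I(5) dp rpos by (simp add: al_Suc[OF assms True] less_imp_le)
  have t5: "\<forall>k. (\<Sum>h\<in>UNIV. al (Suc n) k h) = r k * tt (Suc n)"
  proof
    fix k
    have "(\<Sum>h\<in>UNIV. al (Suc n) k h) = (\<Sum>h\<in>UNIV. al n k h + (if cc n k = h then r k * dd n else 0))"
      using al_Suc[OF assms True] by presburger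
    then have "(\<Sum>h\<in>UNIV. al (Suc n) k h) = (\<Sum>h\<in>UNIV. al n k h) + (\<Sum>h\<in>UNIV. if cc n k = h then r k * dd n else 0)"
      by (simp only: sum.distrib)
    also have "\<dots> = r k * tt n + r k * dd n" using I(6) by simp
    finally show "(\<Sum>h\<in>UNIV. al (Suc n) k h) = r k * tt (Suc n)"
      using tt_Suc[OF assms True] by (simp add: distrib_left)
  qed
  show ?thesis unfolding inv_def using t1 t2 t3 t4 t5 by blast
qed

lemma inv: "inv n"
  by (induction n) (use inv0 inv_Suc in auto)

lemma tt_ge0: "0 \<le> tt n" and tt_le1: "tt n \<le> 1" and rm_ge0: "rm n h \<ge> 0"
  and rm_eq: "rm n h = q h - (\<Sum>k\<in>UNIV. al n k h)" and al_ge0: "al n k h \<ge> 0"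
  and al_sum: "(\<Sum>h\<in>UNIV. al n k h) = r k * tt n"
  using invD[OF inv[of n]] by simp_all

lemma dd: "tt n < 1 \<Longrightarrow> dd n > 0 \<and> dd n \<le> 1 - tt n \<and> (\<forall>h. h \<notin> EXH n \<and> RR n h > 0 \<longrightarrow> dd n \<le> rm n h / RR n h)
     \<and> (dd n = 1 - tt n \<or> (\<exists>h. h \<notin> EXH n \<and> RR n h > 0 \<and> dd n = rm n h / RR n h))"
  using dd_props[OF inv] .

lemma ttS: "tt n < 1 \<Longrightarrow> tt (Suc n) = tt n + dd n" using tt_Suc[OF inv] .
lemma rmS: "tt n < 1 \<Longrightarrow> rm (Suc n) h = rm n h - RR n h * dd n" using rm_Suc[OF inv] .
lemma alS: "tt n < 1 \<Longrightarrow> al (Suc n) k h = al n k h + (if cc n k = h then r k * dd n else 0)"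
  using al_Suc[OF inv] .
lemma ccn: "tt n < 1 \<Longrightarrow> cc n k \<notin> EXH n" using cc_notin[OF inv] .

lemma tt_mono1: "tt n \<le> tt (Suc n)"
  by (cases "tt n < 1") (use ttS dd tt_Suc_t in \<open>auto simp: less_imp_le\<close>)

lemma tt_strict: "tt n < 1 \<Longrightarrow> tt n < tt (Suc n)"
  using ttS dd by auto

lemma tt_mono: "m \<le> n \<Longrightarrow> tt m \<le> tt n"
  by (rule lift_Suc_mono_le[of tt, OF tt_mono1])

lemma rm_mono1: "rm (Suc n) h \<le> rm n h"
proof (cases "tt n < 1")
  case True
  then show ?thesis using rmS[OF True] dd[OF True] RR_nonneg[of n h] by (simp add: less_imp_le)
qed (use rm_Suc_t in simp)

lemma rm_mono: "m \<le> n \<Longrightarrow> rm n h \<le> rm m h"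
  by (rule lift_Suc_antimono_le[of "\<lambda>n. rm n h", OF rm_mono1])

lemma EXH_mono: "m \<le> n \<Longrightarrow> EXH m \<subseteq> EXH n"
proof
  fix x assume "m \<le> n" "x \<in> EXH m"
  then show "x \<in> EXH n" using rm_mono[of m n x] unfolding EXH_def exhausted_def by simp
qed

lemma al_mono1: "al n k h \<le> al (Suc n) k h"
proof (cases "tt n < 1")
  case True
  then show ?thesis using alS[OF True] dd[OF True] rpos by (simp add: less_imp_le)
qed (use al_Suc_t in simp)

lemma al_mono: "m \<le> n \<Longrightarrow> al m k h \<le> al n k h"
  by (rule lift_Suc_mono_le[of "\<lambda>n. al n k h", OF al_mono1])

lemma stable1: "tt n \<ge> 1 \<Longrightarrow> st (n + k) = st n"
  by (induction k) (use step_term tt_def in \<open>auto\<close>)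

end

context run begin

lemma tt_ge1: "tt n \<ge> 1 \<Longrightarrow> tt n = 1" using tt_le1[of n] by simp

lemma progress: "tt n = 1 \<or> card (EXH n) \<ge> n"
proof (induction n)
  case 0 then show ?case by simp
next
  case (Suc n)
  show ?case
  proof (cases "tt n < 1")
    case False
    then have "tt n = 1" using tt_ge1 by simp
    then show ?thesis using tt_Suc_t[of n] by simp
  next
    case True
    note d = dd[OF True]
    have sub: "EXH n \<subseteq> EXH (Suc n)" by (rule EXH_mono) simp
    consider "dd n = 1 - tt n" | h where "h \<notin> EXH n" "RR n h > 0" "dd n = rm n h / RR n h"
      using d by blast
    then show ?thesis
    proof cases
      case 1 then show ?thesis using ttS[OF True] by simp
    next
      case 2
      have "rm (Suc n) h = 0" using rmS[OF True, of h] 2 by simp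
      then have "h \<in> EXH (Suc n)" by (simp add: EXH_def exhausted_def)
      then have "insert h (EXH n) \<subseteq> EXH (Suc n)" using sub by blast
      then have "card (insert h (EXH n)) \<le> card (EXH (Suc n))" by (rule card_mono[rotated]) simp
      then have "card (EXH n) + 1 \<le> card (EXH (Suc n))" using 2(1) by simp
      then show ?thesis using Suc.IH True by auto
    qed
  qed
qed

lemma ttNN: "tt NN = 1"
proof -
  have "card (EXH NN) \<le> card (UNIV :: 'g set)" by (rule card_mono) simp_all
  then show ?thesis using progress[of NN] by (simp add: NN_def)
qed

lemma tt_geNN: "NN \<le> n \<Longrightarrow> tt n = 1"
  using tt_mono[of NN n] ttNN tt_le1[of n] by simp

lemma stable: assumes "tt n \<ge> 1" "n \<le> m" shows "st m = st n"
proof -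
  have "m = n + (m - n)" using assms(2) by simp
  then show ?thesis using stable1[OF assms(1), of "m - n"] by metis
qed

lemma al_stable: assumes "tt n \<ge> 1" "n \<le> m" shows "al m = al n"
  unfolding al_def using stable[OF assms] by (rule arg_cong)

lemma tt_lt1_NN: "tt n < 1 \<Longrightarrow> n < NN"
proof (rule ccontr)
  assume "tt n < 1" "\<not> n < NN"
  then show False using tt_geNN[of n] by simp
qed

lemma SG_eq: "SG q r \<sigma> = al NN"
  by (simp add: SG_def al_def st_def NN_def)

definition ph where "ph y = (GREATEST n. n \<le> NN \<and> tt n \<le> y)"
definition AL where "AL y k h = al (ph y) k h + (y - tt (ph y)) * (if cc (ph y) k = h then r k else 0)"
definition EE where "EE y = EXH (ph y)"
definition CC where "CC y k = cc (ph y) k"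

lemma tt0: "tt 0 = 0" by (simp add: tt_def st_def)
lemma al0: "al 0 k h = 0" by (simp add: al_def st_def)

lemma ph_props: assumes "0 \<le> y"
  shows "ph y \<le> NN" "tt (ph y) \<le> y" "\<And>m. m \<le> NN \<Longrightarrow> tt m \<le> y \<Longrightarrow> m \<le> ph y"
proof -
  have ex: "0 \<le> NN \<and> tt 0 \<le> y" using assms tt0 by simp
  have bd: "\<forall>n. n \<le> NN \<and> tt n \<le> y \<longrightarrow> n \<le> NN" by simp
  have "ph y \<le> NN \<and> tt (ph y) \<le> y" unfolding ph_def by (rule GreatestI_nat[where k=0 and b=NN]) (use ex in auto)
  then show "ph y \<le> NN" "tt (ph y) \<le> y" by simp_all
  show "\<And>m. m \<le> NN \<Longrightarrow> tt m \<le> y \<Longrightarrow> m \<le> ph y"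
    unfolding ph_def by (rule Greatest_le_nat) auto
qed

lemma ph_in: assumes "tt n \<le> y" "y < tt (Suc n)" shows "ph y = n"
proof -
  have y0: "0 \<le> y" using tt_ge0[of n] assms by simp
  have "tt n < 1" using assms tt_le1[of "Suc n"] by simp
  then have nN: "n \<le> NN" using tt_lt1_NN by (simp add: less_imp_le)
  have "n \<le> ph y" using ph_props(3)[OF y0 nN assms(1)] .
  moreover have "ph y \<le> n"
  proof (rule ccontr)
    assume "\<not> ph y \<le> n"
    then have "tt (Suc n) \<le> tt (ph y)" by (intro tt_mono) simp
    then show False using ph_props(2)[OF y0] assms(2) by simp
  qed
  ultimately show ?thesis by simp
qed

lemma ph_lt1: assumes "0 \<le> y" "y < 1" shows "tt (ph y) \<le> y" "y < tt (Suc (ph y))" "tt (ph y) < 1"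
proof -
  show "tt (ph y) \<le> y" using ph_props(2)[OF assms(1)] .
  then show "tt (ph y) < 1" using assms by simp
  then have "ph y < NN" using tt_lt1_NN by simp
  then have sN: "Suc (ph y) \<le> NN" by simp
  show "y < tt (Suc (ph y))"
  proof (rule ccontr)
    assume "\<not> y < tt (Suc (ph y))"
    then have "Suc (ph y) \<le> ph y" using ph_props(3)[OF assms(1) sN] by simp
    then show False by simp
  qed
qed

lemma ph_mono: assumes "0 \<le> y" "y \<le> y'" shows "ph y \<le> ph y'"
proof -
  have "tt (ph y) \<le> y'" using ph_props(2)[OF assms(1)] assms(2) by simp
  then show ?thesis using ph_props(1)[OF assms(1)] ph_props(3)[of y' "ph y"] assms by simp
qed

lemma ph_1: "ph 1 = NN"
proof -
  have "NN \<le> ph 1" using ph_props(3)[of 1 NN] ttNN by simp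
  then show ?thesis using ph_props(1)[of 1] by simp
qed

lemma AL_tt: assumes "m \<le> NN" shows "AL (tt m) = al m"
proof -
  let ?p = "ph (tt m)"
  have t0: "0 \<le> tt m" by (rule tt_ge0)
  have "m \<le> ?p" using ph_props(3)[OF t0 assms] by simp
  then have "tt m \<le> tt ?p" by (rule tt_mono)
  then have eq: "tt ?p = tt m" using ph_props(2)[OF t0] by simp
  have "al ?p = al m"
  proof (cases "tt m < 1")
    case True
    have "?p = m"
    proof (rule ccontr)
      assume "?p \<noteq> m"
      then have "Suc m \<le> ?p" using \<open>m \<le> ?p\<close> by simp
      then have "tt (Suc m) \<le> tt ?p" by (rule tt_mono)
      then show False using tt_strict[OF True] eq by simp
    qed
    then show ?thesis by simp
  next
    case False
    then show ?thesis using al_stable[of m ?p] \<open>m \<le> ?p\<close> by simp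
  qed
  then show ?thesis unfolding AL_def[abs_def] using eq by simp
qed

lemma AL_1: "AL 1 = al NN"
  using AL_tt[of NN] ttNN by simp

lemma AL_0: "AL 0 k h = 0"
  using AL_tt[of 0] tt0 al0 by simp

definition slope where "slope n k h = (if cc n k = h then r k else 0)"

lemma AL_phase: assumes "tt n \<le> y" "y \<le> tt (Suc n)" "tt n < 1"
  shows "AL y k h = al n k h + (y - tt n) * slope n k h"
proof (cases "y < tt (Suc n)")
  case True
  then show ?thesis using ph_in[OF assms(1) True] by (simp add: AL_def slope_def)
next
  case False
  then have y: "y = tt (Suc n)" using assms by simp
  have "Suc n \<le> NN" using tt_lt1_NN[OF assms(3)] by simp
  then have "AL y k h = al (Suc n) k h" using AL_tt y by simp
  also have "\<dots> = al n k h + (y - tt n) * slope n k h"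
    using alS[OF assms(3)] ttS[OF assms(3)] y by (simp add: slope_def)
  finally show ?thesis .
qed

definition sl where "sl y k h = (if CC y k = h then r k else 0)"

lemma G_phase:
  assumes "tt n \<le> s" "s \<le> x" "x \<le> tt (Suc n)" "tt n < 1"
    and "\<forall>y. s \<le> y \<and> y < x \<longrightarrow> lo \<le> sl y k h \<and> sl y k h \<le> hi"
  shows "lo * (x - s) \<le> AL x k h - AL s k h \<and> AL x k h - AL s k h \<le> hi * (x - s)"
proof (cases "s < x")
  case False then show ?thesis using assms by simp
next
  case True
  have e1: "AL x k h = al n k h + (x - tt n) * slope n k h"
    using assms by (intro AL_phase) simp_all
  have e2: "AL s k h = al n k h + (s - tt n) * slope n k h"
    using assms by (intro AL_phase) simp_all
  have d: "AL x k h - AL s k h = (x - s) * slope n k h"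
    unfolding e1 e2 by (simp add: algebra_simps)
  have "ph s = n" using ph_in assms True by simp
  then have "sl s k h = slope n k h" by (simp add: sl_def CC_def slope_def)
  moreover have "lo \<le> sl s k h \<and> sl s k h \<le> hi" using assms(5) True by simp
  ultimately have "lo \<le> slope n k h \<and> slope n k h \<le> hi" by simp
  then show ?thesis using d True by (simp add: mult_left_mono mult_right_mono mult.commute)
qed

lemma G_aux:
  assumes "\<forall>y. s \<le> y \<and> y < x \<longrightarrow> lo \<le> sl y k h \<and> sl y k h \<le> hi" "0 \<le> s" "s \<le> x" "x \<le> tt m"
  shows "lo * (x - s) \<le> AL x k h - AL s k h \<and> AL x k h - AL s k h \<le> hi * (x - s)"
  using assms
proof (induction m arbitrary: s x)
  case 0
  then have "s = x" using tt0 by simp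
  then show ?case by simp
next
  case (Suc m)
  show ?case
  proof (cases "x \<le> tt m")
    case True show ?thesis by (rule Suc.IH[OF Suc.prems(1-3) True])
  next
    case False
    then have tm1: "tt m < 1" using Suc.prems tt_le1[of "Suc m"] by simp
    show ?thesis
    proof (cases "tt m \<le> s")
      case True
      show ?thesis by (rule G_phase[OF True Suc.prems(3,4) tm1 Suc.prems(1)])
    next
      case False
      have c1: "\<forall>y. s \<le> y \<and> y < tt m \<longrightarrow> lo \<le> sl y k h \<and> sl y k h \<le> hi" using Suc.prems(1) \<open>\<not> x \<le> tt m\<close> by auto
      have c2: "\<forall>y. tt m \<le> y \<and> y < x \<longrightarrow> lo \<le> sl y k h \<and> sl y k h \<le> hi" using Suc.prems(1) False by auto
      have A: "lo * (tt m - s) \<le> AL (tt m) k h - AL s k h \<and> AL (tt m) k h - AL s k h \<le> hi * (tt m - s)"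
        using Suc.IH[OF c1 Suc.prems(2)] False by simp
      have B: "lo * (x - tt m) \<le> AL x k h - AL (tt m) k h \<and> AL x k h - AL (tt m) k h \<le> hi * (x - tt m)"
        using G_phase[OF order_refl _ Suc.prems(4) tm1 c2] \<open>\<not> x \<le> tt m\<close> by simp
      have "lo * (x - s) = lo * (tt m - s) + lo * (x - tt m)" by (simp add: algebra_simps)
      moreover have "hi * (x - s) = hi * (tt m - s) + hi * (x - tt m)" by (simp add: algebra_simps)
      ultimately show ?thesis using A B by linarith
    qed
  qed
qed

lemma G:
  assumes "0 \<le> s" "s \<le> x" "x \<le> 1" "\<forall>y. s \<le> y \<and> y < x \<longrightarrow> lo \<le> sl y k h \<and> sl y k h \<le> hi"
  shows "lo * (x - s) \<le> AL x k h - AL s k h \<and> AL x k h - AL s k h \<le> hi * (x - s)"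
  using G_aux[OF assms(4,1,2), of NN] ttNN assms(3) by simp

end

context run begin

lemma sl_bounds: "0 \<le> sl y k h" "sl y k h \<le> r k"
  using rpos by (simp_all add: sl_def less_imp_le)

lemma AL_mono: assumes "0 \<le> s" "s \<le> x" "x \<le> 1" shows "AL s k h \<le> AL x k h"
  using G[OF assms, of 0 k h "r k"] sl_bounds by simp

lemma AL_lip: assumes "0 \<le> s" "s \<le> x" "x \<le> 1" shows "AL x k h - AL s k h \<le> r k * (x - s)"
  using G[OF assms, of 0 k h "r k"] sl_bounds by simp

lemma AL_eat: assumes "0 \<le> s" "s \<le> x" "x \<le> 1" "\<forall>y. s \<le> y \<and> y < x \<longrightarrow> CC y k = h"
  shows "AL x k h - AL s k h = r k * (x - s)"
proof -
  have "\<forall>y. s \<le> y \<and> y < x \<longrightarrow> r k \<le> sl y k h \<and> sl y k h \<le> r k"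
    using assms(4) by (simp add: sl_def)
  from G[OF assms(1-3) this] show ?thesis by simp
qed

lemma AL_none: assumes "0 \<le> s" "s \<le> x" "x \<le> 1" "\<forall>y. s \<le> y \<and> y < x \<longrightarrow> CC y k \<noteq> h"
  shows "AL x k h = AL s k h"
proof -
  have "\<forall>y. s \<le> y \<and> y < x \<longrightarrow> 0 \<le> sl y k h \<and> sl y k h \<le> 0"
    using assms(4) by (simp add: sl_def)
  from G[OF assms(1-3) this] show ?thesis by simp
qed

lemma AL_ge0: assumes "0 \<le> y" "y \<le> 1" shows "AL y k h \<ge> 0"
  using AL_mono[OF order_refl assms, of k h] AL_0 by simp

lemma EE_mono: assumes "0 \<le> y" "y \<le> y'" shows "EE y \<subseteq> EE y'"
  unfolding EE_def by (rule EXH_mono[OF ph_mono[OF assms]])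

lemma EXH_sub_EE: assumes "n \<le> NN" shows "EXH n \<subseteq> EE (tt n)"
  unfolding EE_def by (rule EXH_mono[OF ph_props(3)[OF tt_ge0 assms order_refl]])

lemma CC_notin: assumes "0 \<le> y" "y < 1" shows "CC y k \<notin> EE y"
  unfolding CC_def EE_def using ccn ph_lt1(3)[OF assms] by blast

lemma CC_cg: "CC y k = cur_good (\<sigma> k) (EE y)"
  by (simp add: CC_def EE_def cc_def)

lemma CC_phase: assumes "tt n \<le> y" "y < tt (Suc n)" shows "CC y k = cc n k" "EE y = EXH n"
  using ph_in[OF assms] by (simp_all add: CC_def EE_def)

lemma sum_slope: "(\<Sum>k\<in>UNIV. slope n k h) = RR n h"
  using sum_cc[of n h 1] unfolding slope_def mult_1_right .

lemma remY: assumes "0 \<le> y" "y \<le> 1"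
  shows "(\<Sum>k\<in>UNIV. AL y k h) \<le> q h \<and> (h \<notin> EE y \<longrightarrow> (\<Sum>k\<in>UNIV. AL y k h) < q h)"
proof (cases "y < 1")
  case False
  then have y: "y = 1" using assms by simp
  have "(\<Sum>k\<in>UNIV. AL y k h) = q h - rm NN h" using y AL_1 rm_eq[of NN h] by simp
  moreover have "rm NN h \<ge> 0" by (rule rm_ge0)
  moreover have "h \<notin> EE y \<Longrightarrow> rm NN h > 0"
    using y ph_1 by (simp add: EE_def EXH_def exhausted_def)
  ultimately show ?thesis by auto
next
  case True
  let ?p = "ph y"
  note pl = ph_lt1[OF assms(1) True]
  have A: "\<And>k. AL y k h = al ?p k h + (y - tt ?p) * slope ?p k h"
    using AL_phase[OF pl(1) less_imp_le[OF pl(2)] pl(3)] by simp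
  have "(\<Sum>k\<in>UNIV. AL y k h) = (\<Sum>k\<in>UNIV. al ?p k h) + (y - tt ?p) * RR ?p h"
    unfolding A sum.distrib sum_distrib_left[symmetric] sum_slope ..
  also have "\<dots> = q h - rm ?p h + (y - tt ?p) * RR ?p h" using rm_eq[of ?p h] by simp
  finally have S: "(\<Sum>k\<in>UNIV. AL y k h) = q h - rm ?p h + (y - tt ?p) * RR ?p h" .
  have d: "y - tt ?p < dd ?p" using pl ttS[OF pl(3)] by simp
  have key: "(y - tt ?p) * RR ?p h \<le> rm ?p h \<and> (h \<notin> EE y \<longrightarrow> (y - tt ?p) * RR ?p h < rm ?p h)"
  proof (cases "RR ?p h > 0")
    case True
    have nin: "h \<notin> EXH ?p" using RR_pos_notin[OF inv pl(3) True] .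
    then have "dd ?p \<le> rm ?p h / RR ?p h" using dd[OF pl(3)] True by blast
    then have "dd ?p * RR ?p h \<le> rm ?p h" using True by (simp add: field_simps)
    moreover have "(y - tt ?p) * RR ?p h < dd ?p * RR ?p h" using d True by simp
    ultimately show ?thesis by simp
  next
    case False
    then have "RR ?p h = 0" using RR_nonneg[of ?p h] by simp
    moreover have "h \<notin> EE y \<Longrightarrow> rm ?p h > 0" by (simp add: EE_def EXH_def exhausted_def)
    ultimately show ?thesis using rm_ge0[of ?p h] by simp
  qed
  show ?thesis using S key by simp
qed

lemma AL_const_after: assumes "h \<in> EE s" "0 \<le> s" "s \<le> x" "x \<le> 1"
  shows "AL x k h = AL s k h"
proof (rule AL_none[OF assms(2-4)], intro allI impI)
  fix y assume y: "s \<le> y \<and> y < x"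
  then have "h \<in> EE y" using EE_mono[OF assms(2)] assms(1) by blast
  moreover have "CC y k \<notin> EE y" using CC_notin y assms by simp
  ultimately show "CC y k \<noteq> h" by blast
qed

lemma CC_arrive: assumes "k' < length (\<sigma> k)" "\<sigma> k ! k' = h" "h \<notin> EE y" "\<forall>l<k'. \<sigma> k ! l \<in> EE y"
  shows "CC y k = h"
  unfolding CC_cg using cg_eq[of k' "\<sigma> k" "EE y"] assms by simp

lemma cc_arrive: assumes "k' < length (\<sigma> k)" "\<sigma> k ! k' = h" "h \<notin> EXH n" "\<forall>l<k'. \<sigma> k ! l \<in> EXH n"
  shows "cc n k = h"
  unfolding cc_def using cg_eq[of k' "\<sigma> k" "EXH n"] assms by simp

lemma cc_pre: assumes "tt n < 1" "cc n k = h"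
  shows "\<exists>k'<length (\<sigma> k). \<sigma> k ! k' = h \<and> (\<forall>l<k'. \<sigma> k ! l \<in> EXH n)"
proof -
  have ne: "EXH n \<noteq> UNIV" using ccn[OF assms(1)] by blast
  obtain k' where k': "k'<length (\<sigma> k)" "cur_good (\<sigma> k) (EXH n) = \<sigma> k!k'" "\<sigma> k!k' \<notin> EXH n" "\<forall>l<k'. \<sigma> k!l \<in> EXH n"
    using cg_exists[OF perm_ex[OF perm[rule_format] ne]] by blast
  then show ?thesis using assms(2) unfolding cc_def by auto
qed

lemma al_eat_d0: assumes "\<forall>p. m \<le> p \<and> p < m + d \<longrightarrow> cc p k = h"
  shows "al (m + d) k h = al m k h + r k * (tt (m + d) - tt m)"
  using assms
proof (induction d)
  case 0 then show ?case by simp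
next
  case (Suc d)
  have IH: "al (m + d) k h = al m k h + r k * (tt (m + d) - tt m)" using Suc by simp
  show ?case
  proof (cases "tt (m + d) < 1")
    case True
    have "cc (m + d) k = h" using Suc.prems by simp
    then show ?thesis using IH alS[OF True, of k h] ttS[OF True]
      by (simp add: algebra_simps)
  next
    case False
    then show ?thesis using IH al_Suc_t[of "m + d"] tt_Suc_t[of "m + d"] by simp
  qed
qed

lemma al_eat_d: assumes "m \<le> n" "\<forall>p. m \<le> p \<and> p < n \<longrightarrow> cc p k = h"
  shows "al n k h = al m k h + r k * (tt n - tt m)"
  using al_eat_d0[of m "n - m" k h] assms by simp

lemma al_none_d0: assumes "\<forall>p. m \<le> p \<and> p < m + d \<and> tt p < 1 \<longrightarrow> cc p k \<noteq> h"
  shows "al (m + d) k h = al m k h"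
  using assms
proof (induction d)
  case 0 then show ?case by simp
next
  case (Suc d)
  have IH: "al (m + d) k h = al m k h" using Suc by simp
  show ?case
  proof (cases "tt (m + d) < 1")
    case True
    have "cc (m + d) k \<noteq> h" using Suc.prems True by simp
    then show ?thesis using IH alS[OF True, of k h] by simp
  next
    case False
    then show ?thesis using IH al_Suc_t[of "m + d"] by simp
  qed
qed

lemma al_none_d: assumes "m \<le> n" "\<forall>p. m \<le> p \<and> p < n \<and> tt p < 1 \<longrightarrow> cc p k \<noteq> h"
  shows "al n k h = al m k h"
  using al_none_d0[of m "n - m" k h] assms by simp

lemma al_lip_d: assumes "m \<le> n" shows "al n k h - al m k h \<le> r k * (tt n - tt m)"
proof -
  have "\<And>d. al (m + d) k h - al m k h \<le> r k * (tt (m + d) - tt m)"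
  proof -
    fix d show "al (m + d) k h - al m k h \<le> r k * (tt (m + d) - tt m)"
    proof (induction d)
      case 0 then show ?case by simp
    next
      case (Suc d)
      show ?case
      proof (cases "tt (m + d) < 1")
        case True
        have "al (Suc (m + d)) k h \<le> al (m + d) k h + r k * dd (m + d)"
          using alS[OF True, of k h] dd[OF True] rpos by (simp add: less_imp_le)
        then show ?thesis using Suc ttS[OF True] by (simp add: algebra_simps)
      next
        case False
        then show ?thesis using Suc al_Suc_t[of "m + d"] tt_Suc_t[of "m + d"] by simp
      qed
    qed
  qed
  from this[of "n - m"] show ?thesis using assms by simp
qed

lemma exh_const_d: assumes "h \<in> EXH m" "m \<le> n" shows "al n k h = al m k h"
proof (rule al_none_d[OF assms(2)], intro allI impI)
  fix p assume p: "m \<le> p \<and> p < n \<and> tt p < 1"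
  then have "cc p k \<notin> EXH p" using ccn by blast
  moreover have "h \<in> EXH p" using EXH_mono[of m p] p assms(1) by blast
  ultimately show "cc p k \<noteq> h" by blast
qed

end


lemma sg_step_cong:
  assumes "\<And>k. cur_good (\<sigma> k) (exhausted rem) = cur_good (\<sigma>' k) (exhausted rem)"
  shows "sg_step r \<sigma> (t, rem, a) = sg_step r \<sigma>' (t, rem, a)"
  unfolding sg_step_def Let_def prod.case by (simp only: assms)

locale pair =
  fixes q :: "'g::finite \<Rightarrow> real" and r :: "'a::finite \<Rightarrow> real"
    and \<pi> :: "'a \<Rightarrow> 'g list" and i :: 'a and \<sigma> :: "'a \<Rightarrow> 'g list"
  assumes qpos: "\<forall>j. q j > 0" and rpos: "\<forall>k. r k > 0"
    and sumeq: "(\<Sum>j\<in>UNIV. q j) = (\<Sum>k\<in>UNIV. r k)"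
    and permp: "\<forall>k. is_perm_list (\<pi> k)"
    and minmax: "(MIN j. q j) \<ge> (MAX k. r k)"
    and permD: "\<forall>k. is_perm_list (\<sigma> k)"
    and sig_other: "\<forall>k. k \<noteq> i \<longrightarrow> \<sigma> k = \<pi> k"
begin

sublocale T: run q r \<pi>
  using qpos rpos sumeq permp by unfold_locales

sublocale D: run q r \<sigma>
  using qpos rpos sumeq permD by unfold_locales

lemma NN_eq: "D.NN = T.NN" by (simp add: T.NN_def D.NN_def)

lemma qr: "r k \<le> q h"
proof -
  have "r k \<le> (MAX k. r k)" by (rule Max_ge) simp_all
  moreover have "(MIN j. q j) \<le> q h" by (rule Min_le) simp_all
  ultimately show ?thesis using minmax by simp
qed

lemma runs_eq: assumes "\<forall>n'<n. T.tt n' < 1 \<longrightarrow> T.cc n' i = D.cc n' i"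
  shows "D.st n = T.st n"
  using assms
proof (induction n)
  case 0 then show ?case unfolding T.st_def D.st_def by simp
next
  case (Suc n)
  have IH: "D.st n = T.st n" using Suc by simp
  show ?case
  proof (cases "T.tt n < 1")
    case False
    have "D.tt n = T.tt n" using IH by (simp add: T.tt_def D.tt_def)
    then have "D.st (Suc n) = D.st n" "T.st (Suc n) = T.st n"
      using False T.step_term D.step_term by simp_all
    then show ?thesis using IH by simp
  next
    case True
    have ci: "T.cc n i = D.cc n i" using Suc.prems True by simp
    have E: "D.EXH n = T.EXH n" using IH by (simp add: T.EXH_def D.EXH_def T.rm_def D.rm_def)
    have "\<And>k. cur_good (\<sigma> k) (exhausted (T.rm n)) = cur_good (\<pi> k) (exhausted (T.rm n))"
    proof -
      fix k show "cur_good (\<sigma> k) (exhausted (T.rm n)) = cur_good (\<pi> k) (exhausted (T.rm n))"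
      proof (cases "k = i")
        case True
        then show ?thesis using ci E by (simp add: T.cc_def D.cc_def T.EXH_def)
      qed (use sig_other in simp)
    qed
    then have "sg_step r \<sigma> (T.tt n, T.rm n, T.al n) = sg_step r \<pi> (T.tt n, T.rm n, T.al n)"
      by (rule sg_step_cong)
    then show ?thesis unfolding D.st_Suc T.st_Suc IH T.st_eq[of n] .
  qed
qed

end

locale dv = pair +
  fixes n0 :: nat
  assumes d1: "T.tt n0 < 1" and d2: "T.cc n0 i \<noteq> D.cc n0 i"
    and d3: "\<forall>n<n0. T.tt n < 1 \<longrightarrow> T.cc n i = D.cc n i"
begin

abbreviation "g \<equiv> T.cc n0 i"
abbreviation "t0 \<equiv> T.tt n0"

lemma eq0: "n \<le> n0 \<Longrightarrow> D.st n = T.st n"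
  using d3 by (intro runs_eq) auto

lemma eq0': assumes "n \<le> n0" shows "D.tt n = T.tt n" "D.al n = T.al n" "D.EXH n = T.EXH n" "D.rm n = T.rm n"
  using eq0[OF assms] by (simp_all add: D.tt_def T.tt_def D.al_def T.al_def D.EXH_def T.EXH_def D.rm_def T.rm_def)

lemma n0N: "n0 < T.NN" using T.tt_lt1_NN[OF d1] .

lemma ALD0: "D.AL t0 = T.al n0"
proof -
  have "n0 \<le> D.NN" using n0N NN_eq by simp
  then show ?thesis using D.AL_tt[of n0] eq0'[of n0] by simp
qed

lemma g_notin: "g \<notin> T.EXH n0" using T.ccn[OF d1] .

lemma gpos: "\<exists>kg<length (\<pi> i). \<pi> i ! kg = g \<and> (\<forall>l<kg. \<pi> i ! l \<in> T.EXH n0)"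
  using T.cc_pre[OF d1 refl] .

definition ng where "ng = (LEAST n. g \<in> T.EXH n \<or> 1 \<le> T.tt n)"

lemma ng_at: "g \<in> T.EXH ng \<or> 1 \<le> T.tt ng"
  unfolding ng_def by (rule LeastI[of _ T.NN]) (simp add: T.ttNN)

lemma ng_le: "ng \<le> T.NN"
  unfolding ng_def by (rule Least_le) (simp add: T.ttNN)

lemma ng_before: "p < ng \<Longrightarrow> g \<notin> T.EXH p \<and> T.tt p < 1"
  using not_less_Least[of p "\<lambda>n. g \<in> T.EXH n \<or> 1 \<le> T.tt n"] unfolding ng_def[symmetric] by simp

lemma n0_ng: "n0 < ng"
proof (rule ccontr)
  assume "\<not> n0 < ng"
  then have "T.EXH ng \<subseteq> T.EXH n0" "T.tt ng \<le> T.tt n0" using T.EXH_mono T.tt_mono by simp_all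
  then show False using ng_at g_notin d1 by auto
qed

lemma T_eats: assumes "n0 \<le> p" "p < ng" shows "T.cc p i = g"
proof -
  obtain kg where kg: "kg<length (\<pi> i)" "\<pi> i ! kg = g" "\<forall>l<kg. \<pi> i ! l \<in> T.EXH n0"
    using gpos by blast
  have "T.EXH n0 \<subseteq> T.EXH p" using T.EXH_mono assms(1) .
  then show ?thesis using T.cc_arrive[OF kg(1,2)] kg(3) ng_before[OF assms(2)] by blast
qed

lemma a_val: "T.al T.NN i g = T.al n0 i g + r i * (T.tt ng - t0)"
proof -
  have e: "T.al ng i g = T.al n0 i g + r i * (T.tt ng - t0)"
  proof -
    have "\<forall>p. n0 \<le> p \<and> p < ng \<longrightarrow> T.cc p i = g" using T_eats by blast
    then show ?thesis using T.al_eat_d[of n0 ng i g] n0_ng by (simp only: less_imp_le)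
  qed
  have "T.al T.NN i g = T.al ng i g"
  proof (cases "g \<in> T.EXH ng")
    case True show ?thesis by (rule T.exh_const_d[OF True ng_le])
  next
    case False then show ?thesis using ng_at T.al_stable[of ng T.NN] ng_le by simp
  qed
  then show ?thesis using e by simp
qed

end

context dv begin

lemma K:
  assumes "n0 \<le> m" "Suc m \<le> ng" "h \<notin> T.EXH m" "\<forall>n\<le>m. T.EXH n \<subseteq> D.EE (T.tt n)"
    "h \<notin> D.EE (T.tt (Suc m))" "k \<noteq> i" "T.al (Suc m) k h > 0"
  shows "\<exists>m0\<le>m. T.al (Suc m) k h = r k * (T.tt (Suc m) - T.tt m0)
           \<and> (\<forall>y. T.tt m0 \<le> y \<and> y \<le> T.tt (Suc m) \<longrightarrow> D.CC y k = h)"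
proof -
  let ?P = "\<lambda>p. p \<le> m \<and> T.tt p < 1 \<and> T.cc p k = h"
  have ex: "\<exists>p. ?P p"
  proof (rule ccontr)
    assume "\<not> (\<exists>p. ?P p)"
    then have "\<forall>p. 0 \<le> p \<and> p < Suc m \<and> T.tt p < 1 \<longrightarrow> T.cc p k \<noteq> h" by auto
    then have "T.al (Suc m) k h = T.al 0 k h" by (intro T.al_none_d) simp_all
    then show False using assms(7) T.al0 by simp
  qed
  define m0 where "m0 = (LEAST p. ?P p)"
  have Pm0: "?P m0" unfolding m0_def by (rule LeastI_ex[OF ex])
  have before: "\<forall>p. p < m0 \<longrightarrow> \<not> ?P p" unfolding m0_def using not_less_Least by blast
  have al0: "T.al m0 k h = 0"
  proof -
    have "\<forall>p. 0 \<le> p \<and> p < m0 \<and> T.tt p < 1 \<longrightarrow> T.cc p k \<noteq> h" using before Pm0 by auto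
    then have "T.al m0 k h = T.al 0 k h" by (intro T.al_none_d) simp_all
    then show ?thesis using T.al0 by simp
  qed
  obtain k' where k': "k' < length (\<pi> k)" "\<pi> k ! k' = h" "\<forall>l<k'. \<pi> k ! l \<in> T.EXH m0"
    using T.cc_pre[of m0 k h] Pm0 by blast
  have eats: "\<forall>p. m0 \<le> p \<and> p < Suc m \<longrightarrow> T.cc p k = h"
  proof (intro allI impI)
    fix p assume p: "m0 \<le> p \<and> p < Suc m"
    have "T.EXH m0 \<subseteq> T.EXH p" using T.EXH_mono p by simp
    moreover have "h \<notin> T.EXH p" using assms(3) T.EXH_mono[of p m] p by auto
    ultimately show "T.cc p k = h" using T.cc_arrive[OF k'(1,2)] k'(3) by blast
  qed
  have A: "T.al (Suc m) k h = r k * (T.tt (Suc m) - T.tt m0)"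
    using T.al_eat_d[of m0 "Suc m" k h] eats al0 Pm0 by simp
  have B: "\<forall>y. T.tt m0 \<le> y \<and> y \<le> T.tt (Suc m) \<longrightarrow> D.CC y k = h"
  proof (intro allI impI)
    fix y assume y: "T.tt m0 \<le> y \<and> y \<le> T.tt (Suc m)"
    have y0: "0 \<le> T.tt m0" by (rule T.tt_ge0)
    have "T.EXH m0 \<subseteq> D.EE (T.tt m0)" using assms(4) Pm0 by blast
    also have "\<dots> \<subseteq> D.EE y" using D.EE_mono[OF y0] y by simp
    finally have pre: "\<forall>l<k'. \<pi> k ! l \<in> D.EE y" using k'(3) by blast
    have "D.EE y \<subseteq> D.EE (T.tt (Suc m))" using D.EE_mono[of y] y y0 by simp
    then have "h \<notin> D.EE y" using assms(5) by blast
    moreover have "\<sigma> k = \<pi> k" using sig_other assms(6) by simp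
    ultimately show "D.CC y k = h" using D.CC_arrive[of k' k h y] k' pre by simp
  qed
  show ?thesis using A B Pm0 by blast
qed


lemma T_sum_exh: assumes "h \<in> T.EXH n" shows "(\<Sum>k\<in>UNIV. T.al n k h) = q h"
proof -
  have "T.rm n h = 0" using assms T.rm_ge0[of n h] by (simp add: T.EXH_def exhausted_def)
  then show ?thesis using T.rm_eq[of n h] by simp
qed

lemma i_part: assumes "n0 \<le> n" "n < ng" "h \<noteq> g" "T.tt n \<le> y" "y \<le> 1"
  shows "T.al n i h \<le> D.AL y i h"
proof -
  have "\<forall>p. n0 \<le> p \<and> p < n \<and> T.tt p < 1 \<longrightarrow> T.cc p i \<noteq> h"
  proof (intro allI impI)
    fix p assume "n0 \<le> p \<and> p < n \<and> T.tt p < 1"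
    then have "T.cc p i = g" using T_eats[of p] assms(2) by simp
    then show "T.cc p i \<noteq> h" using assms(3) by simp
  qed
  then have "T.al n i h = T.al n0 i h" using T.al_none_d[of n0 n i h] assms(1) by simp
  also have "\<dots> = D.AL t0 i h" using ALD0 by simp
  also have "\<dots> \<le> D.AL y i h"
  proof (rule D.AL_mono[OF T.tt_ge0 _ assms(5)])
    show "t0 \<le> y" using T.tt_mono[OF assms(1)] assms(4) by simp
  qed
  finally show ?thesis .
qed

lemma H2: "n < ng \<Longrightarrow> T.EXH n \<subseteq> D.EE (T.tt n)"
proof (induction n rule: less_induct)
  case (less n)
  show ?case
  proof (cases n)
    case 0
    have "T.EXH 0 = {}" using qpos by (simp add: T.EXH_def exhausted_def T.rm_def T.st_def not_le)
    then show ?thesis using 0 by simp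
  next
    case (Suc m)
    have IHall: "\<forall>n'\<le>m. T.EXH n' \<subseteq> D.EE (T.tt n')" using less Suc by simp
    show ?thesis
    proof
      fix h assume hin: "h \<in> T.EXH n"
      show "h \<in> D.EE (T.tt n)"
      proof (cases "h \<in> T.EXH m")
        case True
        then have "h \<in> D.EE (T.tt m)" using IHall by blast
        moreover have "D.EE (T.tt m) \<subseteq> D.EE (T.tt n)" using D.EE_mono[OF T.tt_ge0 T.tt_mono[of m n]] Suc by simp
        ultimately show ?thesis by blast
      next
        case hm: False
        show ?thesis
        proof (cases "n \<le> n0")
          case True
          have "n \<le> D.NN" using True n0N NN_eq by simp
          then have "D.EXH n \<subseteq> D.EE (D.tt n)" by (rule D.EXH_sub_EE)
          then have "T.EXH n \<subseteq> D.EE (T.tt n)" using eq0'[OF True] by simp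
          then show ?thesis using hin by blast
        next
          case False
          then have m0: "n0 \<le> m" using Suc by simp
          show ?thesis
          proof (rule ccontr)
            assume hD: "h \<notin> D.EE (T.tt n)"
            have lt: "(\<Sum>k\<in>UNIV. D.AL (T.tt n) k h) < q h"
              using D.remY[OF T.tt_ge0 T.tt_le1] hD by blast
            have eqT: "(\<Sum>k\<in>UNIV. T.al n k h) = q h" by (rule T_sum_exh[OF hin])
            have "\<forall>k\<in>UNIV. T.al n k h \<le> D.AL (T.tt n) k h"
            proof
              fix k
              show "T.al n k h \<le> D.AL (T.tt n) k h"
              proof (cases "k = i")
                case True
                have "h \<noteq> g" using ng_before[OF less.prems] hin by blast
                then show ?thesis using i_part[OF _ less.prems _ order_refl T.tt_le1] True False by simp
              next
                case ki: False
                show ?thesis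
                proof (cases "T.al n k h > 0")
                  case False
                  then show ?thesis using D.AL_ge0[OF T.tt_ge0 T.tt_le1, of n k h] by simp
                next
                  case True
                  obtain m0 where mm: "m0 \<le> m" "T.al (Suc m) k h = r k * (T.tt (Suc m) - T.tt m0)"
                    "\<forall>y. T.tt m0 \<le> y \<and> y \<le> T.tt (Suc m) \<longrightarrow> D.CC y k = h"
                    using K[OF m0 _ hm IHall _ ki] less.prems Suc hD True by auto
                  have le: "T.tt m0 \<le> T.tt n" using T.tt_mono[of m0 n] mm(1) Suc by simp
                  have "D.AL (T.tt n) k h - D.AL (T.tt m0) k h = r k * (T.tt n - T.tt m0)"
                    using D.AL_eat[OF T.tt_ge0 le T.tt_le1] mm(3) Suc by simp
                  moreover have "D.AL (T.tt m0) k h \<ge> 0" by (rule D.AL_ge0[OF T.tt_ge0 T.tt_le1])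
                  ultimately show ?thesis using mm(2) Suc by simp
                qed
              qed
            qed
            then have "(\<Sum>k\<in>UNIV. T.al n k h) \<le> (\<Sum>k\<in>UNIV. D.AL (T.tt n) k h)" by (intro sum_mono) blast
            then show False using lt eqT by simp
          qed
        qed
      qed
    qed
  qed
qed

end

context dv begin

lemma K2: assumes "n0 \<le> m" "Suc m \<le> ng" "h \<notin> T.EXH m" "h \<notin> D.EE (T.tt (Suc m))" "k \<noteq> i"
  shows "T.al (Suc m) k h \<le> D.AL (T.tt (Suc m)) k h"
proof (cases "T.al (Suc m) k h > 0")
  case False
  then show ?thesis using D.AL_ge0[OF T.tt_ge0 T.tt_le1, of "Suc m" k h] by simp
next
  case True
  have IHall: "\<forall>n'\<le>m. T.EXH n' \<subseteq> D.EE (T.tt n')" using H2 assms(2) by simp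
  obtain m0 where mm: "m0 \<le> m" "T.al (Suc m) k h = r k * (T.tt (Suc m) - T.tt m0)"
    "\<forall>y. T.tt m0 \<le> y \<and> y \<le> T.tt (Suc m) \<longrightarrow> D.CC y k = h"
    using K[OF assms(1,2,3) IHall assms(4,5) True] by blast
  have le: "T.tt m0 \<le> T.tt (Suc m)" using T.tt_mono[of m0 "Suc m"] mm(1) by simp
  have "D.AL (T.tt (Suc m)) k h - D.AL (T.tt m0) k h = r k * (T.tt (Suc m) - T.tt m0)"
    using D.AL_eat[OF T.tt_ge0 le T.tt_le1] mm(3) by simp
  moreover have "D.AL (T.tt m0) k h \<ge> 0" by (rule D.AL_ge0[OF T.tt_ge0 T.tt_le1])
  ultimately show ?thesis using mm(2) by simp
qed

lemma D_first: "D.tt n0 = t0" "t0 < D.tt (Suc n0)" "D.al (Suc n0) i g = T.al n0 i g"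
    "\<forall>y. t0 \<le> y \<and> y < D.tt (Suc n0) \<longrightarrow> D.CC y i \<noteq> g"
proof -
  show dt: "D.tt n0 = t0" using eq0' by simp
  then have d1': "D.tt n0 < 1" using d1 by simp
  show "t0 < D.tt (Suc n0)" using D.tt_strict[OF d1'] dt by simp
  show "D.al (Suc n0) i g = T.al n0 i g" using D.alS[OF d1', of i g] d2 eq0'[of n0] by simp
  show "\<forall>y. t0 \<le> y \<and> y < D.tt (Suc n0) \<longrightarrow> D.CC y i \<noteq> g"
  proof (intro allI impI)
    fix y assume "t0 \<le> y \<and> y < D.tt (Suc n0)"
    then have "D.CC y i = D.cc n0 i" using D.CC_phase(1)[of n0 y i] dt by simp
    then show "D.CC y i \<noteq> g" using d2 by simp
  qed
qed

lemma core: "D.al D.NN i g < T.al T.NN i g"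
proof -
  note fs = D_first
  let ?t1 = "D.tt (Suc n0)"
  let ?\<alpha> = "T.al n0 i g"
  have ri: "r i > 0" using rpos by simp
  have NN: "D.NN = T.NN" by (rule NN_eq)
  show ?thesis
  proof (cases "1 \<le> T.tt ng")
    case True
    then have tau: "T.tt ng = 1" using T.tt_le1[of ng] by simp
    have "Suc n0 \<le> D.NN" using n0N NN by simp
    then have "D.al D.NN i g - D.al (Suc n0) i g \<le> r i * (D.tt D.NN - ?t1)" by (rule D.al_lip_d)
    then have "D.al D.NN i g \<le> ?\<alpha> + r i * (1 - ?t1)" using fs(3) D.ttNN by simp
    also have "\<dots> < ?\<alpha> + r i * (1 - t0)" using fs(2) ri by simp
    finally show ?thesis using a_val tau by simp
  next
    case False
    then have gin: "g \<in> T.EXH ng" using ng_at by simp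
    have tau1: "T.tt ng < 1" using False by simp
    obtain m where m: "ng = Suc m" using n0_ng by (cases ng) auto
    have m0: "n0 \<le> m" using n0_ng m by simp
    have gm: "g \<notin> T.EXH m" using ng_before m by simp
    have tg: "t0 < T.tt ng"
    proof -
      have "t0 < T.tt (Suc n0)" by (rule T.tt_strict[OF d1])
      also have "\<dots> \<le> T.tt ng" using T.tt_mono n0_ng by simp
      finally show ?thesis .
    qed
    have aeq: "T.al T.NN i g = T.al ng i g" using T.exh_const_d[OF gin ng_le] by simp
    have aval: "T.al ng i g = ?\<alpha> + r i * (T.tt ng - t0)" using a_val aeq by simp
    have b1: "D.al D.NN i g = D.AL 1 i g" using D.AL_1 by simp
    show ?thesis
    proof (cases "g \<in> D.EE (T.tt ng)")
      case True
      let ?u = "min (T.tt ng) ?t1"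
      have "D.AL 1 i g = D.AL (T.tt ng) i g"
        using D.AL_const_after[OF True T.tt_ge0 T.tt_le1 order_refl] by simp
      have u0: "0 \<le> t0" by (rule T.tt_ge0)
      have "D.AL ?u i g = D.AL t0 i g"
      proof (rule D.AL_none[OF u0])
        show "t0 \<le> ?u" using tg fs(2) by simp
        show "?u \<le> 1" using T.tt_le1[of ng] by simp
        show "\<forall>y. t0 \<le> y \<and> y < ?u \<longrightarrow> D.CC y i \<noteq> g" using fs(4) by simp
      qed
      moreover have "D.AL (T.tt ng) i g - D.AL ?u i g \<le> r i * (T.tt ng - ?u)"
        by (rule D.AL_lip) (use u0 tg fs(2) T.tt_le1[of ng] in auto)
      moreover have "D.AL t0 i g = ?\<alpha>" using ALD0 by simp
      moreover have "r i * (T.tt ng - ?u) < r i * (T.tt ng - t0)" using ri tg fs(2) by simp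
      ultimately show ?thesis using b1 \<open>D.AL 1 i g = D.AL (T.tt ng) i g\<close> aeq aval by simp
    next
      case gD: False
      let ?tau = "T.tt ng"
      let ?U = "UNIV - {i}"
      have tau0: "0 \<le> ?tau" by (rule T.tt_ge0)
      have sumT: "(\<Sum>k\<in>UNIV. T.al ng k g) = q g" by (rule T_sum_exh[OF gin])
      have splitT: "(\<Sum>k\<in>UNIV. T.al ng k g) = T.al ng i g + (\<Sum>k\<in>?U. T.al ng k g)"
        by (rule sum.remove) simp_all
      have ai_le: "T.al ng i g \<le> r i * ?tau"
      proof -
        have "T.al ng i g \<le> (\<Sum>h\<in>UNIV. T.al ng i h)" by (rule member_le_sum) (simp_all add: T.al_ge0)
        then show ?thesis using T.al_sum by simp
      qed
      have "r i * ?tau < r i" using ri tau1 by simp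
      then have ai_lt: "T.al ng i g < q g" using ai_le qr[of i g] by simp
      obtain j where j: "j \<noteq> i" "T.al ng j g > 0"
      proof (rule ccontr)
        assume "\<not> thesis"
        have "\<forall>k\<in>?U. T.al ng k g = 0"
        proof
          fix k assume k: "k \<in> ?U"
          show "T.al ng k g = 0"
          proof (rule ccontr)
            assume "T.al ng k g \<noteq> 0"
            then have "T.al ng k g > 0" using T.al_ge0[of ng k g] by simp
            moreover have "k \<noteq> i" using k by simp
            ultimately show False using that[of k] \<open>\<not> thesis\<close> by simp
          qed
        qed
        then have "(\<Sum>k\<in>?U. T.al ng k g) = 0" by simp
        then show False using sumT splitT ai_lt by linarith
      qed
      have IHall: "\<forall>n'\<le>m. T.EXH n' \<subseteq> D.EE (T.tt n')"
      proof (intro allI impI)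
        fix n' assume "n' \<le> m"
        then have "n' < ng" using m by simp
        then show "T.EXH n' \<subseteq> D.EE (T.tt n')" by (rule H2)
      qed
      have Sm: "Suc m \<le> ng" using m by simp
      have jpos: "T.al (Suc m) j g > 0" using j(2) m by simp
      have gD': "g \<notin> D.EE (T.tt (Suc m))" using gD m by simp
      obtain m1 where mm: "m1 \<le> m" "T.al (Suc m) j g = r j * (T.tt (Suc m) - T.tt m1)"
        "\<forall>y. T.tt m1 \<le> y \<and> y \<le> T.tt (Suc m) \<longrightarrow> D.CC y j = g"
        using K[OF m0 Sm gm IHall gD' j(1) jpos] by blast
      have le1: "T.tt m1 \<le> ?tau" using T.tt_mono[of m1 ng] mm(1) m by simp
      have CCt: "D.CC ?tau j = g" using mm(3) le1 m by simp
      let ?p = "D.ph ?tau"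
      note pl = D.ph_lt1[OF tau0 tau1]
      let ?t2 = "D.tt (Suc ?p)"
      have eatj: "\<forall>y. ?tau \<le> y \<and> y < ?t2 \<longrightarrow> D.CC y j = g"
      proof (intro allI impI)
        fix y assume y: "?tau \<le> y \<and> y < ?t2"
        have "D.CC y j = D.cc ?p j" using D.CC_phase(1)[of ?p y j] pl(1) y by simp
        moreover have "D.CC ?tau j = D.cc ?p j" using D.CC_phase(1)[of ?p ?tau j] pl(1,2) by simp
        ultimately show "D.CC y j = g" using CCt by simp
      qed
      have t2le: "?t2 \<le> 1" by (rule D.tt_le1)
      have "D.AL ?t2 j g - D.AL ?tau j g = r j * (?t2 - ?tau)"
        using D.AL_eat[OF tau0 _ t2le eatj] pl(2) by simp
      moreover have "r j * (?t2 - ?tau) > 0" using rpos pl(2) by simp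
      moreover have "D.AL ?t2 j g \<le> D.AL 1 j g"
        using D.AL_mono[OF _ t2le order_refl] tau0 pl(2) by simp
      ultimately have jstrict: "D.AL ?tau j g < D.AL 1 j g" by simp
      have allk: "\<forall>k\<in>?U. T.al ng k g \<le> D.AL 1 k g"
      proof
        fix k assume k: "k \<in> ?U"
        have "T.al ng k g \<le> D.AL ?tau k g" using K2[OF m0 _ gm gD'] k m by simp
        also have "\<dots> \<le> D.AL 1 k g" using D.AL_mono[OF tau0 T.tt_le1 order_refl] .
        finally show "T.al ng k g \<le> D.AL 1 k g" .
      qed
      have "T.al ng j g \<le> D.AL ?tau j g" using K2[OF m0 _ gm gD' j(1)] m by simp
      then have "T.al ng j g < D.AL 1 j g" using jstrict by simp
      then have sstrict: "(\<Sum>k\<in>?U. T.al ng k g) < (\<Sum>k\<in>?U. D.AL 1 k g)"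
        using allk j(1) by (intro sum_strict_mono_ex1) auto
      have splitD: "(\<Sum>k\<in>UNIV. D.AL 1 k g) = D.AL 1 i g + (\<Sum>k\<in>?U. D.AL 1 k g)"
        by (rule sum.remove) simp_all
      have "(\<Sum>k\<in>UNIV. D.AL 1 k g) \<le> q g" using D.remY[of 1 g] by simp
      then have "D.AL 1 i g < T.al ng i g" using splitD splitT sumT sstrict by simp
      then show ?thesis using b1 aeq by simp
    qed
  qed
qed

end

context dv begin

lemma final: "\<not> lex_prefers (\<pi> i) (D.al D.NN i) (T.al T.NN i)"
proof
  assume lp: "lex_prefers (\<pi> i) (D.al D.NN i) (T.al T.NN i)"
  obtain kg where kg: "kg<length (\<pi> i)" "\<pi> i ! kg = g" "\<forall>l<kg. \<pi> i ! l \<in> T.EXH n0"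
    using gpos by blast
  have NN: "D.NN = T.NN" by (rule NN_eq)
  have same: "\<forall>l<kg. D.al D.NN i (\<pi> i ! l) = T.al T.NN i (\<pi> i ! l)"
  proof (intro allI impI)
    fix l assume "l < kg"
    then have ex: "\<pi> i ! l \<in> T.EXH n0" using kg(3) by simp
    have n0le: "n0 \<le> T.NN" using n0N by simp
    have "T.al T.NN i (\<pi> i ! l) = T.al n0 i (\<pi> i ! l)" by (rule T.exh_const_d[OF ex n0le])
    moreover have "D.al D.NN i (\<pi> i ! l) = D.al n0 i (\<pi> i ! l)"
      using D.exh_const_d[of "\<pi> i ! l" n0 D.NN i] ex eq0'[of n0] n0le NN by simp
    ultimately show "D.al D.NN i (\<pi> i ! l) = T.al T.NN i (\<pi> i ! l)" using eq0'[of n0] by simp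
  qed
  from lp obtain k where k: "k < length (\<pi> i)"
    "\<forall>l<k. D.al D.NN i (\<pi> i ! l) = T.al T.NN i (\<pi> i ! l)"
    "D.al D.NN i (\<pi> i ! k) > T.al T.NN i (\<pi> i ! k)"
    unfolding lex_prefers_def by blast
  have c: "D.al D.NN i g < T.al T.NN i g" by (rule core)
  consider "k < kg" | "k = kg" | "kg < k" by linarith
  then show False
  proof cases
    case 1 then show ?thesis using same k(3) by simp
  next
    case 2 then show ?thesis using k(3) kg(2) c by simp
  next
    case 3 then show ?thesis using k(2) kg(2) c by force
  qed
qed

end

context pair begin

lemma pair_final: "\<not> lex_prefers (\<pi> i) (D.al D.NN i) (T.al T.NN i)"
proof (cases "\<exists>n. T.tt n < 1 \<and> T.cc n i \<noteq> D.cc n i")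
  case True
  define n0 where "n0 = (LEAST n. T.tt n < 1 \<and> T.cc n i \<noteq> D.cc n i)"
  have a: "T.tt n0 < 1 \<and> T.cc n0 i \<noteq> D.cc n0 i" unfolding n0_def by (rule LeastI_ex[OF True])
  have b: "\<forall>n<n0. T.tt n < 1 \<longrightarrow> T.cc n i = D.cc n i"
    unfolding n0_def using not_less_Least by blast
  interpret dv q r \<pi> i \<sigma> n0
    by unfold_locales (use a b in auto)
  show ?thesis by (rule final)
next
  case False
  then have "D.st T.NN = T.st T.NN" by (intro runs_eq) auto
  then have "D.al D.NN = T.al T.NN" using NN_eq by (simp add: D.al_def T.al_def)
  then show ?thesis by (simp add: lex_prefers_def)
qed

end

theorem theorem2:
  fixes q :: "'g::finite \<Rightarrow> real" and r :: "'a::finite \<Rightarrow> real"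
    and \<pi> :: "'a \<Rightarrow> 'g list" and i :: 'a and \<sigma>i :: "'g list"
  assumes "\<forall>j. q j > 0" and "\<forall>k. r k > 0"
    and "(\<Sum>j\<in>UNIV. q j) = (\<Sum>k\<in>UNIV. r k)"
    and "\<forall>k. is_perm_list (\<pi> k)"
    and "(MIN j. q j) \<ge> (MAX k. r k)"
    and "is_perm_list \<sigma>i"
  shows "\<not> lex_prefers (\<pi> i) (SG q r (\<pi>(i := \<sigma>i)) i) (SG q r \<pi> i)"
proof -
  interpret pair q r \<pi> i "\<pi>(i := \<sigma>i)"
    using assms by unfold_locales auto
  have "SG q r (\<pi>(i := \<sigma>i)) = D.al D.NN" by (rule D.SG_eq)
  moreover have "SG q r \<pi> = T.al T.NN" by (rule T.SG_eq)
  ultimately show ?thesis using pair_final by simp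
qed


end
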